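(* There is an absolute constant $C \in \mathbb{N}$ such that for every odd integer $n \ge 1$ there exists a $C$-Lipschitz mapping $\psi\colon\{0,1\}^n\to\{0,1\}^n$ from ${\sf Majority}$ to ${\sf Dictator}$; that is, $\psi$ is a bijection, ${\sf Majority}(z) = \psi(z)_1$ for every $z\in\{0,1\}^n$, and ${\sf dist}(\psi(x),\psi(y)) \le C\,{\sf dist}(x,y)$ for all $x,y\in\{0,1\}^n$.
   Context: ${\sf dist}$ denotes Hamming distance. ${\sf Majority}\colon\{0,1\}^n\to\{0,1\}$ is defined by ${\sf Majority}(x)=1$ if $\sum_{i=1}^n x_i > n/2$ and $0$ otherwise. ${\sf Dictator}(x)=x_1$. Given $f,g\colon\{0,1\}^n\to\{0,1\}$, a mapping from $f$ to $g$ is a bijection $\psi\colon\{0,1\}^n\to\{0,1\}^n$ with $f(z)=g(\psi(z))$ for all $z$. A map $\phi$ is $C$-Lipschitz if ${\sf dist}(\phi(x),\phi(y))\le C\,{\sf dist}(x,y)$ for all $x,y$. *)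

theory Defs
  imports Main
begin

text \<open>Boolean hypercube {0,1}^n as bool lists of length n (True = 1); coordinate 1 of the
paper is list index 0.\<close>

definition hcube :: "nat \<Rightarrow> bool list set" where
  "hcube n = {xs. length xs = n}"

definition hdist :: "bool list \<Rightarrow> bool list \<Rightarrow> nat" where
  "hdist xs ys = card {i. i < length xs \<and> i < length ys \<and> xs ! i \<noteq> ys ! i}"

definition majority :: "bool list \<Rightarrow> bool" where
  "majority xs \<longleftrightarrow> 2 * card {i. i < length xs \<and> xs ! i} > length xs"

definition dictator :: "bool list \<Rightarrow> bool" where
  "dictator xs = xs ! 0"

definition lipschitz_on_cube :: "nat \<Rightarrow> nat \<Rightarrow> (bool list \<Rightarrow> bool list) \<Rightarrow> bool" where
  "lipschitz_on_cube n C \<psi> \<longleftrightarrow>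
     (\<forall>x\<in>hcube n. \<forall>y\<in>hcube n. hdist (\<psi> x) (\<psi> y) \<le> C * hdist x y)"

end

theory Submission
  imports Defs
begin

definition psi :: "bool list \<Rightarrow> bool list" where
  "psi xs = majority xs # map (\<lambda>i. xs!i \<noteq> xs!Suc i) [0..<length xs - 1]"

lemma psi_len: "length xs \<ge> 1 \<Longrightarrow> length (psi xs) = length xs"
  by (simp add: psi_def)

lemma psi_nth0: "psi xs ! 0 = majority xs" by (simp add: psi_def)

lemma psi_nthS: "Suc j < length xs \<Longrightarrow> psi xs ! Suc j = (xs!j \<noteq> xs!Suc j)"
proof -
  assume a: "Suc j < length xs"
  then have "[0..<length xs - 1] ! j = j" by simp
  then show ?thesis using a by (simp add: psi_def)
qed

lemma card_not:
  "card {i. i < length xs \<and> \<not> xs!i} = length xs - card {i. i < length xs \<and> xs!i}"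
proof -
  have "{i. i < length xs \<and> \<not> xs!i} = {..<length xs} - {i. i < length xs \<and> xs!i}" by auto
  moreover have "card ({..<length xs} - {i. i < length xs \<and> xs!i}) = length xs - card {i. i < length xs \<and> xs!i}"
    by (subst card_Diff_subset) auto
  ultimately show ?thesis by simp
qed

lemma maj_not: "odd (length xs) \<Longrightarrow> majority (map Not xs) = (\<not> majority xs)"
proof -
  assume o: "odd (length xs)"
  have "{i. i < length (map Not xs) \<and> map Not xs ! i} = {i. i < length xs \<and> \<not> xs!i}" by auto
  hence c: "card {i. i < length (map Not xs) \<and> map Not xs ! i} = length xs - card {i. i < length xs \<and> xs!i}"
    using card_not by simp
  have le: "card {i. i < length xs \<and> xs!i} \<le> length xs"
    by (rule order_trans[OF card_mono[of "{..<length xs}"]]) auto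
  have ar: "\<And>c n::nat. odd n \<Longrightarrow> c \<le> n \<Longrightarrow> (n < 2 * (n - c)) = (\<not> n < 2 * c)" by presburger
  have "majority (map Not xs) = (length xs < 2 * (length xs - card {i. i < length xs \<and> xs!i}))"
    unfolding majority_def using c by simp
  then show ?thesis unfolding majority_def using ar[OF o le] by simp
qed

lemma xor_prop:
  fixes x y :: "bool list"
  assumes "length x = length y" "\<And>j. Suc j < length x \<Longrightarrow> (x!j \<noteq> x!Suc j) = (y!j \<noteq> y!Suc j)"
  shows "i < length x \<Longrightarrow> (x!i = y!i) = (x!0 = y!0)"
proof (induction i)
  case 0 then show ?case by simp
next
  case (Suc i)
  then have "(x!i = y!i) = (x!0 = y!0)" by simp
  moreover have "(x!i \<noteq> x!Suc i) = (y!i \<noteq> y!Suc i)" using assms(2) Suc.prems by simp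
  ultimately show ?case
    by argo
qed

lemma psi_inj:
  assumes "odd n" "length x = n" "length y = n" "psi x = psi y"
  shows "x = y"
proof -
  have n1: "n \<ge> 1" using assms(1) by presburger
  have m: "majority x = majority y"
    using arg_cong[OF assms(4), of "\<lambda>l. l!0"] by (simp only: psi_nth0)
  have h: "(x!j \<noteq> x!Suc j) = (y!j \<noteq> y!Suc j)" if j: "Suc j < length x" for j
  proof -
    have "psi x ! Suc j = psi y ! Suc j" using assms(4) by simp
    moreover have "psi x ! Suc j = (x!j \<noteq> x!Suc j)" by (rule psi_nthS[OF j])
    moreover have "psi y ! Suc j = (y!j \<noteq> y!Suc j)" by (rule psi_nthS) (use j assms in simp)
    ultimately show ?thesis by simp
  qed
  have len: "length x = length y" using assms by simp
  have key: "\<And>i. i < length x \<Longrightarrow> (x!i = y!i) = (x!0 = y!0)"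
    by (rule xor_prop[OF len h])
  show ?thesis
  proof (cases "x!0 = y!0")
    case True
    then show ?thesis using key assms by (auto intro: nth_equalityI)
  next
    case False
    have "y = map Not x" using key False assms by (auto intro!: nth_equalityI)
    then show ?thesis using maj_not[of x] m assms by simp
  qed
qed

lemma psi_lip:
  assumes "length x = n" "length y = n" "n \<ge> 1"
  shows "hdist (psi x) (psi y) \<le> 3 * hdist x y"
proof -
  define D where "D = {i. i < n \<and> x!i \<noteq> y!i}"
  have hd: "hdist x y = card D" unfolding hdist_def D_def using assms by simp
  have fD: "finite D" unfolding D_def by simp
  show ?thesis
  proof (cases "D = {}")
    case True
    then have "x = y" unfolding D_def using assms by (auto intro: nth_equalityI)
    then show ?thesis by (simp add: hdist_def)
  next
    case False
    then have c1: "card D \<ge> 1" using fD by (simp add: Suc_le_eq card_gt_0_iff)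
    have sub: "{i. i < length (psi x) \<and> i < length (psi y) \<and> psi x ! i \<noteq> psi y ! i}
               \<subseteq> {0} \<union> Suc ` D \<union> D"
    proof
      fix i assume i: "i \<in> {i. i < length (psi x) \<and> i < length (psi y) \<and> psi x ! i \<noteq> psi y ! i}"
      show "i \<in> {0} \<union> Suc ` D \<union> D"
      proof (cases i)
        case 0 then show ?thesis by simp
      next
        case (Suc j)
        have jl: "Suc j < n" using i Suc psi_len assms by auto
        have "psi x ! Suc j \<noteq> psi y ! Suc j" using i Suc by simp
        then have "(x!j \<noteq> x!Suc j) \<noteq> (y!j \<noteq> y!Suc j)" using psi_nthS jl assms by metis
        then have "x!j \<noteq> y!j \<or> x!Suc j \<noteq> y!Suc j" by blast
        then show ?thesis using jl Suc unfolding D_def by auto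
      qed
    qed
    have "hdist (psi x) (psi y) \<le> card ({0} \<union> Suc ` D \<union> D)"
      unfolding hdist_def by (rule card_mono[OF _ sub]) (simp add: fD)
    also have "\<dots> \<le> card ({0} \<union> Suc ` D) + card D" by (rule card_Un_le)
    also have "\<dots> \<le> 1 + card (Suc ` D) + card D" using card_Un_le[of "{0}" "Suc ` D"] by simp
    also have "\<dots> \<le> 1 + 2 * card D" using card_image_le[OF fD, of Suc] by simp
    also have "\<dots> \<le> 3 * card D" using c1 by simp
    finally show ?thesis using hd by simp
  qed
qed

theorem theorem1:
  shows "\<exists>C::nat. \<forall>n::nat. odd n \<longrightarrow>
           (\<exists>\<psi>. bij_betw \<psi> (hcube n) (hcube n)
                 \<and> (\<forall>z\<in>hcube n. majority z = dictator (\<psi> z))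
                 \<and> lipschitz_on_cube n C \<psi>)"
proof -
  have "\<forall>n::nat. odd n \<longrightarrow>
           (\<exists>\<psi>. bij_betw \<psi> (hcube n) (hcube n)
                 \<and> (\<forall>z\<in>hcube n. majority z = dictator (\<psi> z))
                 \<and> lipschitz_on_cube n 3 \<psi>)"
  proof (intro allI impI)
  fix n :: nat assume o: "odd n"
  have n1: "n \<ge> 1" using o by presburger
  have fin: "finite (hcube n)" unfolding hcube_def using finite_lists_length_eq[of "UNIV::bool set" n] by simp
  have inj: "inj_on psi (hcube n)"
    by (rule inj_onI) (use psi_inj[OF o] in \<open>auto simp: hcube_def\<close>)
  have img: "psi ` hcube n \<subseteq> hcube n" using psi_len n1 by (auto simp: hcube_def)
  have "psi ` hcube n = hcube n"
    by (rule card_subset_eq[OF fin img]) (simp add: card_image[OF inj])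
  then have "bij_betw psi (hcube n) (hcube n)" using inj by (simp add: bij_betw_def)
  moreover have "\<forall>z\<in>hcube n. majority z = dictator (psi z)"
    by (simp add: dictator_def psi_nth0)
  moreover have "lipschitz_on_cube n 3 psi"
    unfolding lipschitz_on_cube_def using psi_lip n1 by (auto simp: hcube_def)
  ultimately show "\<exists>\<psi>. bij_betw \<psi> (hcube n) (hcube n)
                 \<and> (\<forall>z\<in>hcube n. majority z = dictator (\<psi> z))
                 \<and> lipschitz_on_cube n 3 \<psi>" by blast
  qed
  then show ?thesis by blast
qed

end
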